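(* For any $a,b\in\mathbb{Z}[\tau]$ with $0<a<b<1$, the subgroup $F_\tau[a,b]$ is isomorphic to $F_\tau$.
   Context: Let $\tau=\frac{\sqrt5-1}{2}$ (a root of $X^2+X-1$, a unit of the ring $\mathbb{Z}[\tau]$). $F_\tau$ denotes the group of piecewise linear homeomorphisms of $[0,1]$ with finitely many breakpoints, all breakpoints in $\mathbb{Z}[\tau]$, and all slopes integer powers of $\tau$ (i.e. $G([0,1];\mathbb{Z}[\tau],\langle\tau\rangle)$ in Bieri–Strebel notation). For $a,b\in\mathbb{Z}[\tau]$ with $0<a<b<1$, $F_\tau[a,b]$ denotes the subgroup of $F_\tau$ consisting of those elements whose support is included in $[a,b]$. *)

theory Defs
  imports "HOL-Analysis.Analysis" "HOL-Algebra.Group"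
begin

definition tau :: real where
  "tau = (sqrt 5 - 1) / 2"

definition Ztau :: "real set" where
  "Ztau = {of_int m + of_int n * tau | m n. True}"

text \<open>Elements of F_tau, represented as maps real => real that are the identity
outside [0,1]. Such a map is a PL
homeomorphism of [0,1] (positive slopes, continuous, f 0 = 0, f 1 = 1), and
every element of G([0,1]; Z[tau], <tau>) is of this form.\<close>
definition F_tau_elem :: "(real \<Rightarrow> real) \<Rightarrow> bool" where
  "F_tau_elem f \<longleftrightarrow>
     (\<forall>x. x \<notin> {0..1} \<longrightarrow> f x = x) \<and> f 0 = 0 \<and> f 1 = 1 \<and>
     (\<exists>xs :: real list. \<exists>ks :: int list.
        length xs = length ks + 1 \<and> hd xs = 0 \<and> last xs = 1 \<and>
        sorted_wrt (<) xs \<and> set xs \<subseteq> Ztau \<and>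
        (\<forall>i < length ks. \<forall>x \<in> {xs ! i .. xs ! Suc i}.
            f x = f (xs ! i) + tau powi (ks ! i) * (x - xs ! i)))"

definition F_tau :: "(real \<Rightarrow> real) monoid" where
  "F_tau = \<lparr>carrier = {f. F_tau_elem f}, mult = (\<circ>), one = id\<rparr>"

definition supp :: "(real \<Rightarrow> real) \<Rightarrow> real set" where
  "supp f = closure {x \<in> {0..1}. f x \<noteq> x}"

definition F_tau_sub :: "real \<Rightarrow> real \<Rightarrow> (real \<Rightarrow> real) monoid" where
  "F_tau_sub a b = F_tau\<lparr>carrier := {f \<in> carrier F_tau. supp f \<subseteq> {a..b}}\<rparr>"

end

theory Submission
  imports Defs
begin


lemma tau_sq: "tau * tau = 1 - tau"
proof -
  have s: "sqrt 5 * sqrt 5 = 5" by simp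
  show ?thesis unfolding tau_def by (simp add: field_simps algebra_simps s)
qed

lemma tau_pos: "tau > 0"
proof -
  have "sqrt 5 > 1" by (simp add: real_less_rsqrt)
  thus ?thesis unfolding tau_def by simp
qed

lemma tau_lt1: "tau < 1"
proof -
  have "sqrt 5 < 3" by (simp add: real_sqrt_less_iff real_less_lsqrt)
  thus ?thesis unfolding tau_def by simp
qed

lemma Ztau_iff: "x \<in> Ztau \<longleftrightarrow> (\<exists>m n. x = of_int m + of_int n * tau)"
  unfolding Ztau_def by auto

lemma Ztau_add[intro]: "x \<in> Ztau \<Longrightarrow> y \<in> Ztau \<Longrightarrow> x + y \<in> Ztau"
  unfolding Ztau_iff
proof (elim exE)
  fix m n p q assume "x = of_int m + of_int n * tau" "y = of_int p + of_int q * tau"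
  then have "x + y = of_int (m+p) + of_int (n+q) * tau" by (simp add: algebra_simps)
  thus "\<exists>m n. x + y = of_int m + of_int n * tau" by blast
qed

lemma Ztau_uminus[intro]: "x \<in> Ztau \<Longrightarrow> - x \<in> Ztau"
  unfolding Ztau_iff
proof (elim exE)
  fix m n assume "x = of_int m + of_int n * tau"
  then have "-x = of_int (-m) + of_int (-n) * tau" by (simp add: algebra_simps)
  thus "\<exists>m n. -x = of_int m + of_int n * tau" by blast
qed

lemma Ztau_diff[intro]: "x \<in> Ztau \<Longrightarrow> y \<in> Ztau \<Longrightarrow> x - y \<in> Ztau"
  using Ztau_add[of x "-y"] Ztau_uminus[of y] by simp

lemma Ztau_mult[intro]: "x \<in> Ztau \<Longrightarrow> y \<in> Ztau \<Longrightarrow> x * y \<in> Ztau"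
  unfolding Ztau_iff
proof (elim exE)
  fix m n p q assume "x = of_int m + of_int n * tau" "y = of_int p + of_int q * tau"
  then have "x * y = of_int m * of_int p + (of_int m * of_int q + of_int n * of_int p) * tau + of_int n * of_int q * (tau * tau)"
    by (simp add: algebra_simps)
  also have "\<dots> = of_int (m*p + n*q) + of_int (m*q+n*p-n*q) * tau"
    by (simp add: tau_sq algebra_simps)
  finally show "\<exists>m n. x * y = of_int m + of_int n * tau" by blast
qed

lemma Ztau_int[intro]: "of_int m \<in> Ztau"
  unfolding Ztau_iff by (rule exI[of _ m], rule exI[of _ 0], simp)

lemma Ztau_0[intro]: "0 \<in> Ztau" using Ztau_int[of 0] by simp
lemma Ztau_1[intro]: "1 \<in> Ztau" using Ztau_int[of 1] by simp
lemma Ztau_tau[intro]: "tau \<in> Ztau"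
  unfolding Ztau_iff by (rule exI[of _ 0], rule exI[of _ 1], simp)

lemma Ztau_pow: "x \<in> Ztau \<Longrightarrow> x ^ n \<in> Ztau"
  by (induction n) auto

lemma tau_inv: "inverse tau = 1 + tau"
  using tau_sq tau_pos by (simp add: field_simps)

lemma Ztau_powi[intro]: "tau powi k \<in> Ztau"
proof (cases "k \<ge> 0")
  case True
  then obtain n where "k = int n" using nonneg_int_cases by blast
  thus ?thesis by (simp add: Ztau_pow Ztau_tau)
next
  case False
  then obtain n where "k = - int n" by (metis neg_int_cases less_le not_le)
  then have "tau powi k = (1 + tau) ^ n"
    by (simp add: power_int_minus tau_inv[symmetric] power_inverse)
  thus ?thesis by (simp add: Ztau_pow Ztau_add Ztau_1 Ztau_tau)
qed

lemma tau_powi_pos[simp]: "tau powi k > 0"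
  using tau_pos by simp

lemma tau_powi_add: "tau powi (j + k) = tau powi j * tau powi k"
  using tau_pos by (simp add: power_int_add)

lemma tau_powi_neg: "tau powi (-k) * tau powi k = 1"
  using tau_pos by (simp add: power_int_minus)




definition plB :: "(real \<Rightarrow> real) \<Rightarrow> real \<Rightarrow> real \<Rightarrow> real set \<Rightarrow> bool" where
"plB f c d B \<longleftrightarrow> c < d \<and> finite B \<and> B \<subseteq> Ztau \<and> B \<subseteq> {c..d} \<and> c \<in> B \<and> d \<in> B \<and> f ` B \<subseteq> Ztau \<and>
   (\<forall>x y. c \<le> x \<longrightarrow> x < y \<longrightarrow> y \<le> d \<longrightarrow> (\<forall>z\<in>B. z \<le> x \<or> y \<le> z) \<longrightarrow>
      (\<exists>k::int. \<forall>t\<in>{x..y}. f t = f x + tau powi k * (t - x)))"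

lemma plB_D:
  assumes "plB f c d B"
  shows "c < d" "finite B" "B \<subseteq> Ztau" "B \<subseteq> {c..d}" "c \<in> B" "d \<in> B" "f ` B \<subseteq> Ztau"
  using assms unfolding plB_def by blast+

lemma plB_I:
  assumes "c < d" "finite B" "B \<subseteq> Ztau" "B \<subseteq> {c..d}" "c \<in> B" "d \<in> B" "f ` B \<subseteq> Ztau"
   "\<And>x y. c \<le> x \<Longrightarrow> x < y \<Longrightarrow> y \<le> d \<Longrightarrow> \<forall>z\<in>B. z \<le> x \<or> y \<le> z \<Longrightarrow>
      (\<exists>k::int. \<forall>t\<in>{x..y}. f t = f x + tau powi k * (t - x))"
  shows "plB f c d B"
  using assms unfolding plB_def by blast

lemma plB_affine:
  assumes "plB f c d B" "c \<le> x" "x < y" "y \<le> d" "\<forall>z\<in>B. z \<le> x \<or> y \<le> z"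
  obtains k where "\<forall>t\<in>{x..y}. f t = f x + tau powi k * (t - x)"
  using assms unfolding plB_def by blast

lemma plB_mono_aux:
  assumes "plB f c d B"
  shows "card (B \<inter> {x<..<y}) = n \<Longrightarrow> c \<le> x \<Longrightarrow> x < y \<Longrightarrow> y \<le> d \<Longrightarrow> f x < f y"
proof (induction n arbitrary: x y rule: less_induct)
  case (less n)
  have fin: "finite B" using plB_D[OF assms] by blast
  show ?case
  proof (cases "B \<inter> {x<..<y} = {}")
    case True
    then have nb: "\<forall>z\<in>B. z \<le> x \<or> y \<le> z" by auto
    obtain k where k: "\<forall>t\<in>{x..y}. f t = f x + tau powi k * (t - x)"
      using plB_affine[OF assms less.prems(2,3,4) nb] by blast
    have "f y = f x + tau powi k * (y - x)" by (rule k[rule_format]) (use less.prems(3) in auto)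
    moreover have "tau powi k * (y - x) > 0" using less.prems(3) by simp
    ultimately show ?thesis by linarith
  next
    case False
    then obtain z where z: "z \<in> B" "x < z" "z < y" by auto
    have fi: "finite (B \<inter> {x<..<y})" using fin by simp
    have "B \<inter> {x<..<z} \<subset> B \<inter> {x<..<y}" using z by auto
    then have "card (B \<inter> {x<..<z}) < card (B \<inter> {x<..<y})" by (rule psubset_card_mono[OF fi])
    then have c1: "card (B \<inter> {x<..<z}) < n" using less.prems(1) by simp
    have "B \<inter> {z<..<y} \<subset> B \<inter> {x<..<y}" using z by auto
    then have "card (B \<inter> {z<..<y}) < card (B \<inter> {x<..<y})" by (rule psubset_card_mono[OF fi])
    then have c2: "card (B \<inter> {z<..<y}) < n" using less.prems(1) by simp
    have "f x < f z" using less.IH[OF c1 refl] less.prems(2,3,4) z by auto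
    moreover have "f z < f y" using less.IH[OF c2 refl] less.prems(2,3,4) z by auto
    ultimately show ?thesis by linarith
  qed
qed

lemma plB_mono:
  assumes "plB f c d B" "c \<le> x" "x < y" "y \<le> d"
  shows "f x < f y"
  using plB_mono_aux[OF assms(1) refl] assms by blast

lemma plB_mono_le:
  assumes "plB f c d B" "c \<le> x" "x \<le> y" "y \<le> d"
  shows "f x \<le> f y"
  using plB_mono[OF assms(1)] assms by (cases "x = y") (auto intro: less_imp_le)

lemma plB_image:
  assumes "plB f c d B"
  shows "f ` {c..d} \<subseteq> {f c .. f d}"
  using plB_mono_le[OF assms] by auto

lemma plB_inj:
  assumes "plB f c d B"
  shows "inj_on f {c..d}"
proof (rule inj_onI)
  fix x y assume "x \<in> {c..d}" "y \<in> {c..d}" "f x = f y"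
  thus "x = y" using plB_mono[OF assms, of x y] plB_mono[OF assms, of y x]
    by (cases x y rule: linorder_cases) auto
qed

lemma plB_cong:
  assumes "plB f c d B" "\<forall>x\<in>{c..d}. f x = g x"
  shows "plB g c d B"
proof -
  have "g ` B = f ` B" using assms plB_D(4)[OF assms(1)] by (intro image_cong) auto
  moreover have "\<exists>k::int. \<forall>t\<in>{x..y}. g t = g x + tau powi k * (t - x)"
    if xy: "c \<le> x" "x < y" "y \<le> d" "\<forall>z\<in>B. z \<le> x \<or> y \<le> z" for x y
  proof -
    obtain k where k: "\<forall>t\<in>{x..y}. f t = f x + tau powi k * (t - x)"
      using plB_affine[OF assms(1) xy] by blast
    have "\<forall>t\<in>{x..y}. g t = g x + tau powi k * (t - x)"
    proof
      fix t assume t: "t \<in> {x..y}"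
      have "f t = f x + tau powi k * (t - x)" by (rule k[rule_format, OF t])
      moreover have "f t = g t" "f x = g x" using assms(2)[rule_format, of t] assms(2)[rule_format, of x] t xy by auto
      ultimately show "g t = g x + tau powi k * (t - x)" by simp
    qed
    thus ?thesis by blast
  qed
  ultimately show ?thesis using plB_D[OF assms(1)] by (intro plB_I) auto
qed

lemma plB_linear:
  assumes "c < d" "c \<in> Ztau" "d \<in> Ztau" "f c \<in> Ztau"
    "\<forall>t\<in>{c..d}. f t = f c + tau powi k * (t - c)"
  shows "plB f c d {c, d}"
proof -
  have "f d = f c + tau powi k * (d - c)" by (rule assms(5)[rule_format]) (use assms(1) in auto)
  then have fd: "f d \<in> Ztau" using assms(2,3,4) by (auto intro!: Ztau_add Ztau_mult Ztau_diff)
  have "\<exists>k::int. \<forall>t\<in>{x..y}. f t = f x + tau powi k * (t - x)"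
    if "c \<le> x" "x < y" "y \<le> d" for x y
  proof -
    have "\<forall>t\<in>{x..y}. f t = f x + tau powi k * (t - x)"
    proof
      fix t assume "t \<in> {x..y}"
      have "f t = f c + tau powi k * (t - c)" by (rule assms(5)[rule_format]) (use \<open>t \<in> {x..y}\<close> that in auto)
      moreover have "f x = f c + tau powi k * (x - c)" by (rule assms(5)[rule_format]) (use that in auto)
      ultimately show "f t = f x + tau powi k * (t - x)" by (simp add: algebra_simps)
    qed
    thus ?thesis by blast
  qed
  thus ?thesis using assms(1,2,3,4) fd by (intro plB_I) auto
qed

lemma plB_concat:
  assumes "plB f c d B1" "plB f d e B2"
  shows "plB f c e (B1 \<union> B2)"
proof -
  have "\<exists>k::int. \<forall>t\<in>{x..y}. f t = f x + tau powi k * (t - x)"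
    if xy: "c \<le> x" "x < y" "y \<le> e" "\<forall>z\<in>B1 \<union> B2. z \<le> x \<or> y \<le> z" for x y
  proof -
    have "d \<in> B1" using plB_D[OF assms(1)] by blast
    then have "d \<le> x \<or> y \<le> d" using xy by blast
    thus ?thesis
    proof
      assume "d \<le> x"
      thus ?thesis using plB_affine[OF assms(2), of x y] xy by blast
    next
      assume "y \<le> d"
      thus ?thesis using plB_affine[OF assms(1), of x y] xy by blast
    qed
  qed
  thus ?thesis using plB_D[OF assms(1)] plB_D[OF assms(2)] by (intro plB_I) auto
qed

lemma plB_piece:
  assumes "plB f c d B" "x \<in> {c..d}" "x \<notin> B"
  shows "\<exists>x0 y0. x0 \<in> B \<and> y0 \<in> B \<and> x0 < x \<and> x < y0 \<and> (\<forall>z\<in>B. z \<le> x0 \<or> y0 \<le> z)"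
proof -
  have fin: "finite B" and cB: "c \<in> B" and dB: "d \<in> B" using plB_D[OF assms(1)] by auto
  have cx: "c < x" "x < d" using assms cB dB by (auto simp: le_less)
  define x0 where "x0 = Max {z\<in>B. z < x}"
  define y0 where "y0 = Min {z\<in>B. x < z}"
  have f1: "finite {z\<in>B. z < x}" "{z\<in>B. z < x} \<noteq> {}" using fin cB cx by auto
  have f2: "finite {z\<in>B. x < z}" "{z\<in>B. x < z} \<noteq> {}" using fin dB cx by auto
  have x0: "x0 \<in> B" "x0 < x" using Max_in[OF f1] unfolding x0_def by auto
  have y0: "y0 \<in> B" "x < y0" using Min_in[OF f2] unfolding y0_def by auto
  have "\<forall>z\<in>B. z \<le> x0 \<or> y0 \<le> z"
  proof
    fix z assume z: "z \<in> B"
    then have "z < x \<or> x < z" using assms(3) by (cases z x rule: linorder_cases) auto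
    thus "z \<le> x0 \<or> y0 \<le> z"
      using Max_ge[OF f1(1), of z] Min_le[OF f2(1), of z] z unfolding x0_def y0_def by auto
  qed
  thus ?thesis using x0 y0 by blast
qed

lemma plB_val:
  assumes "plB f c d B" "x \<in> {c..d}" "x \<in> Ztau"
  shows "f x \<in> Ztau"
proof (cases "x \<in> B")
  case True thus ?thesis using plB_D[OF assms(1)] by auto
next
  case False
  then obtain x0 y0 where p: "x0 \<in> B" "y0 \<in> B" "x0 < x" "x < y0" "\<forall>z\<in>B. z \<le> x0 \<or> y0 \<le> z"
    using plB_piece[OF assms(1,2)] by blast
  have "x0 \<in> {c..d}" "y0 \<in> {c..d}" using p plB_D[OF assms(1)] by auto
  then obtain k where k: "\<forall>t\<in>{x0..y0}. f t = f x0 + tau powi k * (t - x0)"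
    using plB_affine[OF assms(1), of x0 y0] p by auto
  have "f x = f x0 + tau powi k * (x - x0)" by (rule k[rule_format]) (use p in auto)
  moreover have "f x0 \<in> Ztau" "x0 \<in> Ztau" using p plB_D[OF assms(1)] by auto
  ultimately show ?thesis using assms by (auto intro!: Ztau_add Ztau_mult Ztau_diff)
qed

lemma plB_preimage:
  assumes "plB f c d B" "x \<in> {c..d}" "f x \<in> Ztau"
  shows "x \<in> Ztau"
proof (cases "x \<in> B")
  case True thus ?thesis using plB_D[OF assms(1)] by auto
next
  case False
  then obtain x0 y0 where p: "x0 \<in> B" "y0 \<in> B" "x0 < x" "x < y0" "\<forall>z\<in>B. z \<le> x0 \<or> y0 \<le> z"
    using plB_piece[OF assms(1,2)] by blast
  have "x0 \<in> {c..d}" "y0 \<in> {c..d}" using p plB_D[OF assms(1)] by auto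
  then obtain k where k: "\<forall>t\<in>{x0..y0}. f t = f x0 + tau powi k * (t - x0)"
    using plB_affine[OF assms(1), of x0 y0] p by auto
  have e: "f x = f x0 + tau powi k * (x - x0)" by (rule k[rule_format]) (use p in auto)
  have "x = x0 + tau powi (-k) * (f x - f x0)"
  proof -
    have "tau powi (-k) * (f x - f x0) = (tau powi (-k) * tau powi k) * (x - x0)" using e by simp
    thus ?thesis using tau_powi_neg[of k] by simp
  qed
  moreover have "f x0 \<in> Ztau" "x0 \<in> Ztau" using p plB_D[OF assms(1)] by auto
  ultimately show ?thesis using assms
    by (metis Ztau_add Ztau_diff Ztau_mult Ztau_powi)
qed

lemma plB_restrict:
  assumes "plB f c d B" "c \<le> c'" "c' < d'" "d' \<le> d" "c' \<in> Ztau" "d' \<in> Ztau"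
  shows "plB f c' d' (insert c' (insert d' (B \<inter> {c'..d'})))"
proof -
  have v: "f c' \<in> Ztau" "f d' \<in> Ztau" using plB_val[OF assms(1)] assms by auto
  have "\<exists>k::int. \<forall>t\<in>{x..y}. f t = f x + tau powi k * (t - x)"
    if xy: "c' \<le> x" "x < y" "y \<le> d'" "\<forall>z\<in>insert c' (insert d' (B \<inter> {c'..d'})). z \<le> x \<or> y \<le> z" for x y
  proof -
    have nb: "\<forall>z\<in>B. z \<le> x \<or> y \<le> z"
    proof
      fix z assume "z \<in> B"
      show "z \<le> x \<or> y \<le> z"
      proof (cases "z \<in> {c'..d'}")
        case True thus ?thesis using xy \<open>z \<in> B\<close> by blast
      next
        case False thus ?thesis using xy by auto
      qed
    qed
    have cx: "c \<le> x" "y \<le> d" using xy assms by auto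
    obtain k where "\<forall>t\<in>{x..y}. f t = f x + tau powi k * (t - x)"
      using plB_affine[OF assms(1) cx(1) xy(2) cx(2) nb] by blast
    thus ?thesis by blast
  qed
  thus ?thesis using plB_D[OF assms(1)] assms(3,5,6) v by (intro plB_I) auto
qed

lemma plB_comp:
  assumes f: "plB f c d Bf" and g: "plB g c' d' Bg" and im: "f ` {c..d} \<subseteq> {c'..d'}"
  shows "\<exists>B. plB (g \<circ> f) c d B"
proof -
  define B where "B = Bf \<union> (f -` Bg \<inter> {c..d})"
  have fin: "finite B" unfolding B_def
    using plB_D(2)[OF f] plB_D(2)[OF g] plB_inj[OF f] by (auto intro!: finite_vimage_IntI)
  have BZ: "B \<subseteq> Ztau" unfolding B_def
    using plB_D(3)[OF f] plB_D(3)[OF g] plB_preimage[OF f] by auto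
  have Bcd: "B \<subseteq> {c..d}" "c \<in> B" "d \<in> B" unfolding B_def using plB_D[OF f] by auto
  have BV: "(g \<circ> f) ` B \<subseteq> Ztau"
  proof
    fix w assume "w \<in> (g \<circ> f) ` B"
    then obtain z where z: "z \<in> B" "w = g (f z)" by auto
    have "f z \<in> Ztau" by (rule plB_val[OF f]) (use z Bcd BZ in auto)
    moreover have "z \<in> {c..d}" using z Bcd by auto
    then have "f z \<in> {c'..d'}" using im by blast
    ultimately show "w \<in> Ztau" using plB_val[OF g] z by auto
  qed
  have "\<exists>k::int. \<forall>t\<in>{x..y}. (g \<circ> f) t = (g \<circ> f) x + tau powi k * (t - x)"
    if xy: "c \<le> x" "x < y" "y \<le> d" "\<forall>z\<in>B. z \<le> x \<or> y \<le> z" for x y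
  proof -
    have "\<forall>z\<in>Bf. z \<le> x \<or> y \<le> z" using xy unfolding B_def by auto
    then obtain k where k: "\<forall>t\<in>{x..y}. f t = f x + tau powi k * (t - x)"
      using plB_affine[OF f, of x y] xy by auto
    have fy: "f y = f x + tau powi k * (y - x)" by (rule k[rule_format]) (use xy in auto)
    have fxy: "f x < f y" using fy xy by simp
    have "x \<in> {c..d}" "y \<in> {c..d}" using xy by auto
    then have "f x \<in> {c'..d'}" "f y \<in> {c'..d'}" using im by blast+
    then have r: "c' \<le> f x" "f y \<le> d'" by auto
    have nb: "\<forall>p\<in>Bg. p \<le> f x \<or> f y \<le> p"
    proof (rule ccontr)
      assume "\<not> (\<forall>p\<in>Bg. p \<le> f x \<or> f y \<le> p)"
      then obtain p where p: "p \<in> Bg" "f x < p" "p < f y" by auto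
      define t where "t = x + tau powi (-k) * (p - f x)"
      have tk: "tau powi k * (t - x) = p - f x"
        unfolding t_def using tau_powi_neg[of k] by (simp add: algebra_simps)
      have "t - x > 0" unfolding t_def using p by simp
      moreover have "tau powi k * (t - x) < tau powi k * (y - x)" using tk fy p by simp
      then have "t - x < y - x" by simp
      ultimately have t: "x < t" "t < y" by auto
      have "f t = f x + tau powi k * (t - x)" by (rule k[rule_format]) (use t in auto)
      then have "f t = p" using tk by simp
      then have "t \<in> B" unfolding B_def using p t xy by auto
      thus False using xy(4) t by auto
    qed
    obtain j where j: "\<forall>s\<in>{f x..f y}. g s = g (f x) + tau powi j * (s - f x)"
      using plB_affine[OF g r(1) fxy r(2) nb] by blast
    have "\<forall>t\<in>{x..y}. (g \<circ> f) t = (g \<circ> f) x + tau powi (j + k) * (t - x)"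
    proof
      fix t assume t: "t \<in> {x..y}"
      have ft: "f t = f x + tau powi k * (t - x)" by (rule k[rule_format, OF t])
      have tp: "0 \<le> tau powi k" using tau_powi_pos[of k] by linarith
      have "tau powi k * (t - x) \<le> tau powi k * (y - x)" using t tp by (intro mult_left_mono) auto
      moreover have "0 \<le> tau powi k * (t - x)" using t tp by (intro mult_nonneg_nonneg) auto
      ultimately have "f t \<in> {f x..f y}" using ft fy by simp
      then have "g (f t) = g (f x) + tau powi j * (f t - f x)" by (rule j[rule_format])
      then have "g (f t) = g (f x) + tau powi j * (tau powi k * (t - x))" using ft by simp
      thus "(g \<circ> f) t = (g \<circ> f) x + tau powi (j + k) * (t - x)"
        by (simp add: tau_powi_add)
    qed
    thus ?thesis by blast
  qed
  then have "plB (g \<circ> f) c d B"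
    using plB_D(1)[OF f] fin BZ Bcd BV by (intro plB_I) auto
  thus ?thesis by blast
qed




lemma elem_to_plB:
  assumes "F_tau_elem f"
  shows "\<exists>B. plB f 0 1 B"
proof -
  obtain xs :: "real list" and ks :: "int list" where
    L: "length xs = length ks + 1" and H: "hd xs = 0" and La: "last xs = 1" and
    S: "sorted_wrt (<) xs" and Z: "set xs \<subseteq> Ztau" and
    A: "\<forall>i < length ks. \<forall>x \<in> {xs ! i .. xs ! Suc i}. f x = f (xs ! i) + tau powi (ks ! i) * (x - xs ! i)"
    using assms unfolding F_tau_elem_def by blast
  have f0: "f 0 = 0" using assms unfolding F_tau_elem_def by blast
  have ne: "xs \<noteq> []" using L by auto
  have x0: "xs ! 0 = 0" using H ne by (simp add: hd_conv_nth)
  have xl: "xs ! (length xs - 1) = 1" using La ne by (simp add: last_conv_nth)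
  have lt: "xs ! i < xs ! j" if "i < j" "j < length xs" for i j
    using sorted_wrt_nth_less[OF S that] .
  have le: "xs ! i \<le> xs ! j" if "i \<le> j" "j < length xs" for i j
    using lt[of i j] that by (cases "i = j") auto
  have rng: "xs ! i \<in> {0..1}" if "i < length xs" for i
    using le[of 0 i] le[of i "length xs - 1"] that x0 xl by auto
  have setr: "set xs \<subseteq> {0..1}" using rng by (auto simp: in_set_conv_nth)
  have vals: "f (xs ! i) \<in> Ztau" if "i < length xs" for i
    using that
  proof (induction i)
    case 0 thus ?case using x0 f0 by auto
  next
    case (Suc i)
    have i: "i < length ks" using Suc.prems L by auto
    have "xs ! i < xs ! Suc i" using lt[of i "Suc i"] Suc.prems by auto
    then have "xs ! Suc i \<in> {xs ! i .. xs ! Suc i}" by auto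
    then have e: "f (xs ! Suc i) = f (xs ! i) + tau powi (ks ! i) * (xs ! Suc i - xs ! i)"
      using A i by blast
    have "xs ! i \<in> Ztau" "xs ! Suc i \<in> Ztau" using Z Suc.prems by auto
    moreover have "f (xs ! i) \<in> Ztau" using Suc.IH Suc.prems by auto
    ultimately show ?case unfolding e by (intro Ztau_add Ztau_mult Ztau_diff Ztau_powi)
  qed
  have fB: "f ` set xs \<subseteq> Ztau" using vals by (auto simp: in_set_conv_nth)
  have aff: "\<exists>k::int. \<forall>t\<in>{x..y}. f t = f x + tau powi k * (t - x)"
    if xy: "0 \<le> x" "x < y" "y \<le> 1" "\<forall>z\<in>set xs. z \<le> x \<or> y \<le> z" for x y
  proof -
    define I where "I = {i. i < length xs \<and> xs ! i \<le> x}"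
    have fI: "finite I" "0 \<in> I" unfolding I_def using ne x0 xy by auto
    define i where "i = Max I"
    have iI: "i \<in> I" unfolding i_def using fI Max_in by blast
    then have i1: "i < length xs" "xs ! i \<le> x" unfolding I_def by auto
    have "i \<noteq> length xs - 1" using i1 xl xy by auto
    then have i2: "Suc i < length xs" using i1 by auto
    have "Suc i \<notin> I" using Max_ge[OF fI(1), of "Suc i"] unfolding i_def by auto
    then have "x < xs ! Suc i" using i2 unfolding I_def by auto
    moreover have "xs ! Suc i \<in> set xs" using i2 by auto
    ultimately have i3: "y \<le> xs ! Suc i" using xy(4) by fastforce
    have ik: "i < length ks" using i2 L by auto
    have Ai: "\<forall>t \<in> {xs ! i .. xs ! Suc i}. f t = f (xs ! i) + tau powi (ks ! i) * (t - xs ! i)"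
      using A ik by blast
    have "\<forall>t\<in>{x..y}. f t = f x + tau powi (ks ! i) * (t - x)"
    proof
      fix t assume t: "t \<in> {x..y}"
      have "f t = f (xs ! i) + tau powi (ks ! i) * (t - xs ! i)"
        by (rule Ai[rule_format]) (use t i1 i3 in auto)
      moreover have "f x = f (xs ! i) + tau powi (ks ! i) * (x - xs ! i)"
        by (rule Ai[rule_format]) (use xy i1 i3 in auto)
      ultimately show "f t = f x + tau powi (ks ! i) * (t - x)" by (simp add: algebra_simps)
    qed
    thus ?thesis by blast
  qed
  have "plB f 0 1 (set xs)"
    apply (rule plB_I)
    using Z setr fB aff hd_in_set[OF ne] last_in_set[OF ne] H La by auto
  thus ?thesis by blast
qed

lemma plB_to_elem:
  assumes out: "\<forall>x. x \<notin> {0..1} \<longrightarrow> f x = x" and f0: "f 0 = 0" and f1: "f 1 = 1"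
    and P: "plB f 0 1 B"
  shows "F_tau_elem f"
proof -
  have finB: "finite B" using plB_D[OF P] by blast
  obtain xs where S: "sorted_wrt (<) xs" and SB: "set xs = B"
    using ex1_sorted_list_for_set_if_finite[OF finB] by blast
  have ne: "xs \<noteq> []" using SB plB_D(5)[OF P] by auto
  have lt: "xs ! i < xs ! j" if "i < j" "j < length xs" for i j
    using sorted_wrt_nth_less[OF S that] .
  have le: "xs ! i \<le> xs ! j" if "i \<le> j" "j < length xs" for i j
    using lt[of i j] that by (cases "i = j") auto
  have B01: "B \<subseteq> {0..1}" "0 \<in> B" "1 \<in> B" using plB_D[OF P] by auto
  have hd0: "hd xs = 0"
  proof -
    obtain j where j: "j < length xs" "xs ! j = 0" using B01 SB by (metis in_set_conv_nth)
    have "xs ! 0 \<le> 0" using le[of 0 j] j by auto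
    moreover have "xs ! 0 \<ge> 0" using B01 SB ne nth_mem[of 0 xs] by auto
    ultimately show ?thesis using ne by (simp add: hd_conv_nth)
  qed
  have last1: "last xs = 1"
  proof -
    obtain j where j: "j < length xs" "xs ! j = 1" using B01 SB by (metis in_set_conv_nth)
    have "xs ! (length xs - 1) \<ge> 1" using le[of j "length xs - 1"] j by auto
    moreover have "xs ! (length xs - 1) \<le> 1" using B01 SB ne nth_mem[of "length xs - 1" xs] by auto
    ultimately show ?thesis using ne by (simp add: last_conv_nth)
  qed
  define K where "K = (\<lambda>i. SOME k::int. \<forall>t\<in>{xs ! i .. xs ! Suc i}. f t = f (xs ! i) + tau powi k * (t - xs ! i))"
  define ks where "ks = map K [0..<length xs - 1]"
  have L: "length xs = length ks + 1" unfolding ks_def using ne by simp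
  have A: "\<forall>i < length ks. \<forall>x \<in> {xs ! i .. xs ! Suc i}. f x = f (xs ! i) + tau powi (ks ! i) * (x - xs ! i)"
  proof (intro allI impI)
    fix i assume i: "i < length ks"
    then have i2: "Suc i < length xs" using L by auto
    have ksi: "ks ! i = K i" unfolding ks_def using i2 by simp
    have r: "0 \<le> xs ! i" "xs ! Suc i \<le> 1" using B01 SB nth_mem[of i xs] nth_mem[of "Suc i" xs] i2 by auto
    have nb: "\<forall>z\<in>B. z \<le> xs ! i \<or> xs ! Suc i \<le> z"
    proof
      fix z assume "z \<in> B"
      then obtain j where j: "j < length xs" "xs ! j = z" using SB by (metis in_set_conv_nth)
      show "z \<le> xs ! i \<or> xs ! Suc i \<le> z"
      proof (cases "j \<le> i")
        case True thus ?thesis using le[of j i] j i2 by auto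
      next
        case False thus ?thesis using le[of "Suc i" j] j by auto
      qed
    qed
    have ex: "\<exists>k::int. \<forall>t\<in>{xs ! i .. xs ! Suc i}. f t = f (xs ! i) + tau powi k * (t - xs ! i)"
      using plB_affine[OF P r(1) lt[of i "Suc i"] r(2) nb] i2 by auto
    show "\<forall>x \<in> {xs ! i .. xs ! Suc i}. f x = f (xs ! i) + tau powi (ks ! i) * (x - xs ! i)"
      unfolding ksi K_def by (rule someI_ex[OF ex])
  qed
  show ?thesis unfolding F_tau_elem_def
    using out f0 f1 L S SB plB_D(3)[OF P] hd0 last1 A by blast
qed




lemma plB_translate:
  assumes P: "plB f c d B" and s: "s \<in> Ztau" and t: "t \<in> Ztau" and c': "c' = c + t" and d': "d' = d + t"
  shows "plB (\<lambda>x. s + f (x - t)) c' d' ((\<lambda>x. x + t) ` B)"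
proof (rule plB_I)
  show "c' < d'" using plB_D(1)[OF P] c' d' by simp
  show "finite ((\<lambda>x. x + t) ` B)" using plB_D(2)[OF P] by simp
  show "(\<lambda>x. x + t) ` B \<subseteq> Ztau" using plB_D(3)[OF P] t by auto
  show "(\<lambda>x. x + t) ` B \<subseteq> {c'..d'}" using plB_D(4)[OF P] c' d' by auto
  show "c' \<in> (\<lambda>x. x + t) ` B" using plB_D(5)[OF P] c' by auto
  show "d' \<in> (\<lambda>x. x + t) ` B" using plB_D(6)[OF P] d' by auto
  show "(\<lambda>x. s + f (x - t)) ` (\<lambda>x. x + t) ` B \<subseteq> Ztau" using plB_D(7)[OF P] s by (auto simp: image_subset_iff intro!: Ztau_add)
next
  fix x y assume xy: "c' \<le> x" "x < y" "y \<le> d'" "\<forall>z\<in>(\<lambda>x. x + t) ` B. z \<le> x \<or> y \<le> z"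
  have nb: "\<forall>z\<in>B. z \<le> x - t \<or> y - t \<le> z" using xy(4) by force
  have r: "c \<le> x - t" "x - t < y - t" "y - t \<le> d" using xy c' d' by auto
  obtain k where k: "\<forall>u\<in>{x - t..y - t}. f u = f (x - t) + tau powi k * (u - (x - t))"
    using plB_affine[OF P r nb] by blast
  have "\<forall>u\<in>{x..y}. s + f (u - t) = s + f (x - t) + tau powi k * (u - x)"
  proof
    fix u assume u: "u \<in> {x..y}"
    have "f (u - t) = f (x - t) + tau powi k * ((u - t) - (x - t))"
      by (rule k[rule_format]) (use u in auto)
    thus "s + f (u - t) = s + f (x - t) + tau powi k * (u - x)" by simp
  qed
  thus "\<exists>k::int. \<forall>u\<in>{x..y}. s + f (u - t) = s + f (x - t) + tau powi k * (u - x)" by blast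
qed

lemma plB_scale:
  assumes "0 < L" "L \<in> Ztau"
  shows "plB (\<lambda>x. tau powi k * x) 0 L {0, L}"
  by (rule plB_linear[where k = k]) (use assms in auto)

definition equiv_len :: "real \<Rightarrow> real \<Rightarrow> bool" where
"equiv_len L L' \<longleftrightarrow> (\<exists>h g Bh Bg. plB h 0 L Bh \<and> plB g 0 L' Bg \<and> h 0 = 0 \<and> h L = L' \<and> g 0 = 0 \<and> g L' = L \<and>
   (\<forall>x\<in>{0..L}. g (h x) = x) \<and> (\<forall>y\<in>{0..L'}. h (g y) = y))"

lemma equiv_lenI:
  assumes "plB h 0 L Bh" "plB g 0 L' Bg" "h 0 = 0" "h L = L'" "g 0 = 0" "g L' = L"
   "\<And>x. x \<in> {0..L} \<Longrightarrow> g (h x) = x" "\<And>y. y \<in> {0..L'} \<Longrightarrow> h (g y) = y"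
  shows "equiv_len L L'"
  unfolding equiv_len_def using assms by blast

lemma equiv_len_D:
  assumes "equiv_len L L'"
  shows "0 < L" "L \<in> Ztau" "0 < L'" "L' \<in> Ztau"
proof -
  obtain h g Bh Bg where "plB h 0 L Bh" "plB g 0 L' Bg" using assms unfolding equiv_len_def by blast
  thus "0 < L" "L \<in> Ztau" "0 < L'" "L' \<in> Ztau" using plB_D(1,3,6)[of h 0 L Bh] plB_D(1,3,6)[of g 0 L' Bg] by auto
qed

lemma equiv_refl:
  assumes "0 < L" "L \<in> Ztau"
  shows "equiv_len L L"
proof -
  have "plB (\<lambda>x. tau powi 0 * x) 0 L {0, L}" by (rule plB_scale[OF assms])
  then have P: "plB (\<lambda>x. x) 0 L {0, L}" by simp
  show ?thesis by (rule equiv_lenI[OF P P]) auto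
qed

lemma equiv_sym:
  assumes "equiv_len L L'"
  shows "equiv_len L' L"
  using assms unfolding equiv_len_def by blast

lemma equiv_trans:
  assumes "equiv_len L L'" "equiv_len L' L''"
  shows "equiv_len L L''"
proof -
  obtain h1 g1 B1 C1 where E1: "plB h1 0 L B1" "plB g1 0 L' C1" "h1 0 = 0" "h1 L = L'" "g1 0 = 0" "g1 L' = L"
    "\<forall>x\<in>{0..L}. g1 (h1 x) = x" "\<forall>y\<in>{0..L'}. h1 (g1 y) = y"
    using assms(1) unfolding equiv_len_def by blast
  obtain h2 g2 B2 C2 where E2: "plB h2 0 L' B2" "plB g2 0 L'' C2" "h2 0 = 0" "h2 L' = L''" "g2 0 = 0" "g2 L'' = L'"
    "\<forall>x\<in>{0..L'}. g2 (h2 x) = x" "\<forall>y\<in>{0..L''}. h2 (g2 y) = y"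
    using assms(2) unfolding equiv_len_def by blast
  have im1: "h1 ` {0..L} \<subseteq> {0..L'}" using plB_image[OF E1(1)] E1(3,4) by simp
  have im2: "g2 ` {0..L''} \<subseteq> {0..L'}" using plB_image[OF E2(2)] E2(5,6) by simp
  obtain Bh where Bh: "plB (h2 \<circ> h1) 0 L Bh" using plB_comp[OF E1(1) E2(1) im1] by blast
  obtain Bg where Bg: "plB (g1 \<circ> g2) 0 L'' Bg" using plB_comp[OF E2(2) E1(2) im2] by blast
  show ?thesis
  proof (rule equiv_lenI[OF Bh Bg])
    show "(h2 \<circ> h1) 0 = 0" "(h2 \<circ> h1) L = L''" "(g1 \<circ> g2) 0 = 0" "(g1 \<circ> g2) L'' = L"
      using E1 E2 by auto
  next
    fix x assume x: "x \<in> {0..L}"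
    then have "h1 x \<in> {0..L'}" using im1 by blast
    thus "(g1 \<circ> g2) ((h2 \<circ> h1) x) = x" using E1(7) E2(7) x by simp
  next
    fix y assume y: "y \<in> {0..L''}"
    then have "g2 y \<in> {0..L'}" using im2 by blast
    thus "(h2 \<circ> h1) ((g1 \<circ> g2) y) = y" using E1(8) E2(8) y by simp
  qed
qed

lemma equiv_scale:
  assumes "0 < L" "L \<in> Ztau" "L' = tau powi k * L"
  shows "equiv_len L L'"
proof -
  have L': "0 < L'" "L' \<in> Ztau" using assms by auto
  have i1: "tau powi (-k) * tau powi k = 1" by (rule tau_powi_neg)
  have i2: "tau powi k * tau powi (-k) = 1" using i1 by (simp add: mult.commute)
  show ?thesis
  proof (rule equiv_lenI[OF plB_scale[OF assms(1,2), of k] plB_scale[OF L', of "-k"]])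
    show "tau powi k * L = L'" using assms by simp
    show "tau powi (-k) * L' = L" using assms i1 by (simp add: mult.assoc[symmetric])
  next
    fix x show "tau powi (-k) * (tau powi k * x) = x" using i1 by (simp add: mult.assoc[symmetric])
  next
    fix y show "tau powi k * (tau powi (-k) * y) = y" using i2 by (simp add: mult.assoc[symmetric])
  qed auto
qed

lemma equiv_add:
  assumes A1: "equiv_len L1 L1'" and A2: "equiv_len L2 L2'"
  shows "equiv_len (L1 + L2) (L1' + L2')"
proof -
  obtain h1 g1 B1 C1 where E1: "plB h1 0 L1 B1" "plB g1 0 L1' C1" "h1 0 = 0" "h1 L1 = L1'" "g1 0 = 0" "g1 L1' = L1"
    "\<forall>x\<in>{0..L1}. g1 (h1 x) = x" "\<forall>y\<in>{0..L1'}. h1 (g1 y) = y"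
    using A1 unfolding equiv_len_def by blast
  obtain h2 g2 B2 C2 where E2: "plB h2 0 L2 B2" "plB g2 0 L2' C2" "h2 0 = 0" "h2 L2 = L2'" "g2 0 = 0" "g2 L2' = L2"
    "\<forall>x\<in>{0..L2}. g2 (h2 x) = x" "\<forall>y\<in>{0..L2'}. h2 (g2 y) = y"
    using A2 unfolding equiv_len_def by blast
  have D1: "0 < L1" "L1 \<in> Ztau" "0 < L1'" "L1' \<in> Ztau" using equiv_len_D[OF A1] by auto
  have D2: "0 < L2" "L2 \<in> Ztau" "0 < L2'" "L2' \<in> Ztau" using equiv_len_D[OF A2] by auto
  define h where "h = (\<lambda>x. if x \<le> L1 then h1 x else L1' + h2 (x - L1))"
  define g where "g = (\<lambda>y. if y \<le> L1' then g1 y else L1 + g2 (y - L1'))"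
  have ph1: "plB h 0 L1 B1" by (rule plB_cong[OF E1(1)]) (auto simp: h_def)
  have ph2': "plB (\<lambda>x. L1' + h2 (x - L1)) L1 (L1 + L2) ((\<lambda>x. x + L1) ` B2)"
    by (rule plB_translate[OF E2(1) D1(4) D1(2)]) auto
  have ph2: "plB h L1 (L1 + L2) ((\<lambda>x. x + L1) ` B2)"
    by (rule plB_cong[OF ph2']) (auto simp: h_def E1(4) E2(3))
  have ph: "plB h 0 (L1 + L2) (B1 \<union> (\<lambda>x. x + L1) ` B2)" by (rule plB_concat[OF ph1 ph2])
  have pg1: "plB g 0 L1' C1" by (rule plB_cong[OF E1(2)]) (auto simp: g_def)
  have pg2': "plB (\<lambda>y. L1 + g2 (y - L1')) L1' (L1' + L2') ((\<lambda>x. x + L1') ` C2)"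
    by (rule plB_translate[OF E2(2) D1(2) D1(4)]) auto
  have pg2: "plB g L1' (L1' + L2') ((\<lambda>x. x + L1') ` C2)"
    by (rule plB_cong[OF pg2']) (auto simp: g_def E1(6) E2(5))
  have pg: "plB g 0 (L1' + L2') (C1 \<union> (\<lambda>x. x + L1') ` C2)" by (rule plB_concat[OF pg1 pg2])
  have im_h1: "h1 ` {0..L1} \<subseteq> {0..L1'}" using plB_image[OF E1(1)] E1(3,4) by simp
  have im_h2: "h2 ` {0..L2} \<subseteq> {0..L2'}" using plB_image[OF E2(1)] E2(3,4) by simp
  have im_g1: "g1 ` {0..L1'} \<subseteq> {0..L1}" using plB_image[OF E1(2)] E1(5,6) by simp
  have im_g2: "g2 ` {0..L2'} \<subseteq> {0..L2}" using plB_image[OF E2(2)] E2(5,6) by simp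
  show ?thesis
  proof (rule equiv_lenI[OF ph pg])
    show "h 0 = 0" using D1 E1(3) by (simp add: h_def)
    show "h (L1 + L2) = L1' + L2'" using D2 E2(4) by (simp add: h_def)
    show "g 0 = 0" using D1 E1(5) by (simp add: g_def)
    show "g (L1' + L2') = L1 + L2" using D2 E2(6) by (simp add: g_def)
  next
    fix x assume x: "x \<in> {0..L1 + L2}"
    show "g (h x) = x"
    proof (cases "x \<le> L1")
      case True
      then have "x \<in> {0..L1}" using x by auto
      then have "h1 x \<in> {0..L1'}" using im_h1 by blast
      thus ?thesis using True x E1(7) by (simp add: h_def g_def)
    next
      case False
      define u where "u = x - L1"
      have u: "u \<in> {0..L2}" "0 < u" using False x unfolding u_def by auto
      have "h2 u \<in> {0..L2'}" using im_h2 u(1) by blast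
      moreover have "h2 0 < h2 u" using plB_mono[OF E2(1), of 0 u] u by auto
      ultimately have "h x = L1' + h2 u" "\<not> L1' + h2 u \<le> L1'" "g2 (h2 u) = u"
        using False E2(3) E2(7) u unfolding h_def u_def by auto
      thus ?thesis unfolding g_def u_def by simp
    qed
  next
    fix y assume y: "y \<in> {0..L1' + L2'}"
    show "h (g y) = y"
    proof (cases "y \<le> L1'")
      case True
      then have "y \<in> {0..L1'}" using y by auto
      then have "g1 y \<in> {0..L1}" using im_g1 by blast
      thus ?thesis using True y E1(8) by (simp add: h_def g_def)
    next
      case False
      define u where "u = y - L1'"
      have u: "u \<in> {0..L2'}" "0 < u" using False y unfolding u_def by auto
      have "g2 u \<in> {0..L2}" using im_g2 u(1) by blast
      moreover have "g2 0 < g2 u" using plB_mono[OF E2(2), of 0 u] u by auto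
      ultimately have "g y = L1 + g2 u" "\<not> L1 + g2 u \<le> L1" "h2 (g2 u) = u"
        using False E2(5) E2(8) u unfolding g_def u_def by auto
      thus ?thesis unfolding h_def u_def by simp
    qed
  qed
qed




lemma tau_in: "0 < tau" "tau \<in> Ztau" using tau_pos Ztau_tau by auto

lemma equiv_1_2: "equiv_len 1 2"
proof -
  have e1: "equiv_len tau tau" by (rule equiv_refl[OF tau_in])
  have tt: "0 < tau * tau" "tau * tau \<in> Ztau" using tau_in by (auto intro: Ztau_mult)
  have e2: "equiv_len (tau * tau) tau"
    by (rule equiv_scale[OF tt, of _ "-1"]) (use tau_pos in \<open>simp add: power_int_minus\<close>)
  have "equiv_len (tau + tau * tau) (tau + tau)" by (rule equiv_add[OF e1 e2])
  then have e3: "equiv_len 1 (2 * tau)" using tau_sq by simp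
  have t2: "0 < 2 * tau" "2 * tau \<in> Ztau" using tau_in Ztau_add[of tau tau] by auto
  have e4: "equiv_len (2 * tau) 2"
    by (rule equiv_scale[OF t2, of _ "-1"]) (use tau_pos in \<open>simp add: power_int_minus\<close>)
  show ?thesis by (rule equiv_trans[OF e3 e4])
qed

lemma equiv_nat: "n \<ge> 1 \<Longrightarrow> equiv_len (of_nat n) 1"
proof (induction n)
  case 0 thus ?case by simp
next
  case (Suc n)
  show ?case
  proof (cases "n = 0")
    case True thus ?thesis using equiv_refl[of 1] Ztau_1 by simp
  next
    case False
    then have "equiv_len (of_nat n) 1" using Suc.IH by simp
    then have h: "equiv_len (of_nat n + 1) (1 + 1)" by (rule equiv_add) (rule equiv_refl, auto)
    have eqn: "(of_nat n + 1::real) = of_nat (Suc n)" by simp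
    have "equiv_len (of_nat (Suc n)) 2" using h by (simp only: eqn one_add_one)
    thus ?thesis using equiv_trans equiv_sym[OF equiv_1_2] by blast
  qed
qed

lemma equiv_sum1: "equiv_len A 1 \<Longrightarrow> equiv_len B 1 \<Longrightarrow> equiv_len (A + B) 1"
  using equiv_add[of A 1 B 1] equiv_trans equiv_sym[OF equiv_1_2] by simp

lemma equiv_mult:
  assumes "p > 0"
  shows "equiv_len (of_int p * tau powi k) 1"
proof -
  have n: "equiv_len (of_int p) 1" using equiv_nat[of "nat p"] assms by simp
  have pz: "0 < of_int p * tau powi k" "of_int p * tau powi k \<in> Ztau" using assms by auto
  have "equiv_len (of_int p * tau powi k) (tau powi (-k) * (of_int p * tau powi k))"
    by (rule equiv_scale[OF pz, of _ "-k"]) (rule refl)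
  moreover have "tau powi (-k) * (of_int p * tau powi k) = of_int p"
    using tau_powi_neg[of k] by (simp add: algebra_simps)
  ultimately show ?thesis using equiv_trans n by simp
qed

lemma tau_powi_split: "tau powi j = tau powi (j + 1) + tau powi (j + 1 + 1)"
proof -
  have "tau powi (j + 1) = tau powi j * tau" "tau powi (j + 1 + 1) = tau powi j * (tau * tau)"
    using tau_powi_add[of j 1] tau_powi_add[of "j+1" 1] by (simp_all add: mult.assoc)
  thus ?thesis using tau_sq by (simp add: algebra_simps)
qed

lemma equiv_terminal:
  fixes p q :: int
  assumes "p \<ge> 0" "q \<ge> 0" "of_int p * tau powi j + of_int q * tau powi (j + 1) > 0"
  shows "equiv_len (of_int p * tau powi j + of_int q * tau powi (j + 1)) 1"
proof (cases "p = 0")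
  case True
  then have "q > 0" using assms by (cases "q = 0") auto
  thus ?thesis using True equiv_mult by simp
next
  case False
  then have p: "p > 0" using assms by simp
  show ?thesis
  proof (cases "q = 0")
    case True thus ?thesis using equiv_mult[OF p] by simp
  next
    case False
    then have "q > 0" using assms by simp
    thus ?thesis using equiv_sum1 equiv_mult[OF p] equiv_mult by blast
  qed
qed

lemma nonpos_val:
  fixes a b :: int
  assumes "a \<le> 0" "b \<le> 0"
  shows "of_int a * tau powi j + of_int b * tau powi (j + 1) \<le> 0"
proof -
  have "of_int a * tau powi j \<le> 0" using assms less_imp_le[OF tau_powi_pos[of j]]
    by (intro mult_nonpos_nonneg) auto
  moreover have "of_int b * tau powi (j+1) \<le> 0" using assms less_imp_le[OF tau_powi_pos[of "j+1"]]
    by (intro mult_nonpos_nonneg) auto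
  ultimately show ?thesis by simp
qed

lemma equiv_main:
  fixes a b :: int
  shows "nat (\<bar>a\<bar> + \<bar>b\<bar>) = N \<Longrightarrow> of_int a * tau powi j + of_int b * tau powi (j + 1) > 0 \<Longrightarrow>
    equiv_len (of_int a * tau powi j + of_int b * tau powi (j + 1)) 1"
proof (induction N arbitrary: a b j rule: less_induct)
  case (less N)
  show ?case
  proof (cases "a \<ge> 0 \<and> b \<ge> 0")
    case True thus ?thesis using equiv_terminal less.prems(2) by blast
  next
    case nt: False
    show ?thesis
    proof (cases "a \<le> 0 \<and> b \<le> 0")
      case True thus ?thesis using nonpos_val[of a b j] less.prems(2) by auto
    next
      case False
      have eq: "of_int a * tau powi j + of_int b * tau powi (j + 1) =
          of_int (a + b) * tau powi (j + 1) + of_int a * tau powi (j + 1 + 1)"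
        by (subst tau_powi_split) (simp add: algebra_simps)
      have pos: "of_int (a + b) * tau powi (j + 1) + of_int a * tau powi (j + 1 + 1) > 0"
        using less.prems(2) eq by simp
      show ?thesis
      proof (cases "a + b \<ge> 0 \<and> a \<ge> 0")
        case True thus ?thesis using equiv_terminal[OF _ _ pos] eq by simp
      next
        case False2: False
        show ?thesis
        proof (cases "a + b \<le> 0 \<and> a \<le> 0")
          case True thus ?thesis using nonpos_val[of "a + b" a "j + 1"] pos by auto
        next
          case False
          have lt: "nat (\<bar>a + b\<bar> + \<bar>a\<bar>) < N" using less.prems(1) nt False False2 by auto
          show ?thesis using less.IH[OF lt refl pos] eq by simp
        qed
      qed
    qed
  qed
qed

lemma equiv_Ztau:
  assumes "x \<in> Ztau" "x > 0"
  shows "equiv_len x 1"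
proof -
  obtain m n where x: "x = of_int m + of_int n * tau" using assms(1) unfolding Ztau_iff by blast
  have "x = of_int m * tau powi 0 + of_int n * tau powi (0 + 1)" using x by simp
  thus ?thesis using equiv_main[OF refl, of m 0 n] assms(2) by simp
qed




lemma carrier_sub: "carrier (F_tau_sub a b) = {f. F_tau_elem f \<and> supp f \<subseteq> {a..b}}"
  by (simp add: F_tau_sub_def F_tau_def)

lemma carrier_F: "carrier F_tau = {f. F_tau_elem f}"
  by (simp add: F_tau_def)

lemma mult_sub: "x \<otimes>\<^bsub>F_tau_sub a b\<^esub> y = x \<circ> y"
  by (simp add: F_tau_sub_def F_tau_def)

lemma mult_F: "x \<otimes>\<^bsub>F_tau\<^esub> y = x \<circ> y"
  by (simp add: F_tau_def)

lemma elem_D: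
  assumes "F_tau_elem f"
  shows "\<forall>x. x \<notin> {0..1} \<longrightarrow> f x = x" "f 0 = 0" "f 1 = 1"
proof -
  note A = assms[unfolded F_tau_elem_def]
  show "\<forall>x. x \<notin> {0..1} \<longrightarrow> f x = x" using conjunct1[OF A] .
  show "f 0 = 0" using conjunct1[OF conjunct2[OF A]] .
  show "f 1 = 1" using conjunct1[OF conjunct2[OF conjunct2[OF A]]] .
qed

lemma sub_fix:
  assumes "F_tau_elem f" "supp f \<subseteq> {a..b}" "x \<notin> {a..b}"
  shows "f x = x"
proof (cases "x \<in> {0..1}")
  case False thus ?thesis using elem_D(1)[OF assms(1)] by simp
next
  case True
  show ?thesis
  proof (rule ccontr)
    assume "f x \<noteq> x"
    then have "x \<in> {x \<in> {0..1}. f x \<noteq> x}" using True by simp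
    then have "x \<in> supp f" unfolding supp_def using closure_subset[of "{x \<in> {0..1}. f x \<noteq> x}"] by (rule subsetD[rotated])
    thus False using assms(2,3) by (meson subsetD)
  qed
qed

lemma sub_ends:
  assumes P: "plB f 0 1 B" and fx: "\<And>x. x \<notin> {a..b} \<Longrightarrow> f x = x"
    and ab: "0 < a" "a < b" "b < 1"
  shows "f a = a" "f b = b"
proof -
  have fin: "finite B" "0 \<in> B" "1 \<in> B" "B \<subseteq> {0..1}" using plB_D[OF P] by auto
  define S where "S = {z\<in>B. z < a}"
  have S: "finite S" "S \<noteq> {}" unfolding S_def using fin ab by auto
  define x0 where "x0 = Max S"
  have x0: "x0 \<in> B" "x0 < a" using Max_in[OF S] unfolding x0_def S_def by auto
  have x00: "0 \<le> x0" using x0 fin by auto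
  have nb: "\<forall>z\<in>B. z \<le> x0 \<or> a \<le> z"
  proof
    fix z assume "z \<in> B"
    show "z \<le> x0 \<or> a \<le> z"
    proof (cases "z < a")
      case True thus ?thesis using Max_ge[OF S(1), of z] \<open>z \<in> B\<close> unfolding x0_def S_def by auto
    qed auto
  qed
  obtain k where k: "\<forall>t\<in>{x0..a}. f t = f x0 + tau powi k * (t - x0)"
    using plB_affine[OF P x00 x0(2) _ nb] ab by auto
  define m where "m = (x0 + a) / 2"
  have m: "x0 < m" "m < a" using x0 unfolding m_def by auto
  have fx0: "f x0 = x0" using fx x0 by auto
  have fm: "f m = m" using fx m by auto
  have e: "f m = f x0 + tau powi k * (m - x0)" by (rule k[rule_format]) (use m in auto)
  have "tau powi k * (m - x0) = m - x0" using e fx0 fm by linarith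
  then have eq: "tau powi k * (m - x0) = 1 * (m - x0)" by simp
  have tk: "tau powi k = 1" using mult_right_cancel[of "m - x0" "tau powi k" 1] eq m by simp
  have "f a = f x0 + tau powi k * (a - x0)" by (rule k[rule_format]) (use x0 in auto)
  thus "f a = a" using tk fx0 by simp
next
  have fin: "finite B" "0 \<in> B" "1 \<in> B" "B \<subseteq> {0..1}" using plB_D[OF P] by auto
  define S where "S = {z\<in>B. b < z}"
  have S: "finite S" "S \<noteq> {}" unfolding S_def using fin ab by auto
  define y0 where "y0 = Min S"
  have y0: "y0 \<in> B" "b < y0" using Min_in[OF S] unfolding y0_def S_def by auto
  have y01: "y0 \<le> 1" using y0 fin by auto
  have nb: "\<forall>z\<in>B. z \<le> b \<or> y0 \<le> z"
  proof
    fix z assume "z \<in> B"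
    show "z \<le> b \<or> y0 \<le> z"
    proof (cases "b < z")
      case True thus ?thesis using Min_le[OF S(1), of z] \<open>z \<in> B\<close> unfolding y0_def S_def by auto
    qed auto
  qed
  have b0: "0 \<le> b" using ab by simp
  obtain k where k: "\<forall>t\<in>{b..y0}. f t = f b + tau powi k * (t - b)"
    using plB_affine[OF P b0 y0(2) y01 nb] by auto
  define m where "m = (b + y0) / 2"
  have m: "b < m" "m < y0" using y0 unfolding m_def by auto
  have fy0: "f y0 = y0" using fx y0 by auto
  have fm: "f m = m" using fx m by auto
  have e1: "f m = f b + tau powi k * (m - b)" by (rule k[rule_format]) (use m in auto)
  have e2: "f y0 = f b + tau powi k * (y0 - b)" by (rule k[rule_format]) (use y0 in auto)
  have "tau powi k * (y0 - b) - tau powi k * (m - b) = y0 - m" using e1 e2 fm fy0 by linarith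
  then have eq: "tau powi k * (y0 - m) = 1 * (y0 - m)" by (simp add: algebra_simps)
  have tk: "tau powi k = 1" using mult_right_cancel[of "y0 - m" "tau powi k" 1] eq m by simp
  show "f b = b" using e2 fy0 tk by simp
qed

theorem mainTheorem13:
  fixes a b :: real
  assumes "a \<in> Ztau" and "b \<in> Ztau" and "0 < a" and "a < b" and "b < 1"
  shows "F_tau_sub a b \<cong> F_tau"
proof -
  note ab = assms
  define L where "L = b - a"
  have L: "L \<in> Ztau" "0 < L" using ab unfolding L_def by auto
  obtain h0 g0 B0 C0 where E: "plB h0 0 L B0" "plB g0 0 1 C0" "h0 0 = 0" "h0 L = 1" "g0 0 = 0" "g0 1 = L"
    "\<forall>x\<in>{0..L}. g0 (h0 x) = x" "\<forall>y\<in>{0..1}. h0 (g0 y) = y"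
    using equiv_Ztau[OF L] unfolding equiv_len_def by blast
  have im_h0: "h0 ` {0..L} \<subseteq> {0..1}" using plB_image[OF E(1)] E(3,4) by simp
  have im_g0: "g0 ` {0..1} \<subseteq> {0..L}" using plB_image[OF E(2)] E(5,6) by simp
  define h where "h = (\<lambda>x. if x < a then x - a else if x \<le> b then h0 (x - a) else x - b + 1)"
  define hi where "hi = (\<lambda>y. if y < 0 then y + a else if y \<le> 1 then a + g0 y else y + b - 1)"
  have hih: "hi (h x) = x" for x
  proof -
    consider "x < a" | "a \<le> x" "x \<le> b" | "b < x" by fastforce
    thus ?thesis
    proof cases
      case 1 thus ?thesis unfolding h_def hi_def by simp
    next
      case 2
      then have "x - a \<in> {0..L}" unfolding L_def by auto
      then have "h0 (x - a) \<in> {0..1}" "g0 (h0 (x - a)) = x - a" using im_h0 E(7) by blast+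
      thus ?thesis using 2 unfolding h_def hi_def by auto
    next
      case 3 thus ?thesis using ab unfolding h_def hi_def by simp
    qed
  qed
  have hhi: "h (hi y) = y" for y
  proof -
    consider "y < 0" | "0 \<le> y" "y \<le> 1" | "1 < y" by fastforce
    thus ?thesis
    proof cases
      case 1 thus ?thesis unfolding h_def hi_def by simp
    next
      case 2
      then have "y \<in> {0..1}" by auto
      then have "g0 y \<in> {0..L}" "h0 (g0 y) = y" using im_g0 E(8) by blast+
      thus ?thesis using 2 unfolding h_def hi_def L_def by auto
    next
      case 3 thus ?thesis using ab unfolding h_def hi_def by simp
    qed
  qed
  have ph': "plB (\<lambda>x. 0 + h0 (x - a)) a b ((\<lambda>x. x + a) ` B0)"
    by (rule plB_translate[OF E(1) Ztau_0 ab(1)]) (auto simp: L_def)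
  have ph: "plB h a b ((\<lambda>x. x + a) ` B0)"
    by (rule plB_cong[OF ph']) (auto simp: h_def)
  have phi': "plB (\<lambda>y. a + g0 (y - 0)) 0 1 ((\<lambda>x. x + 0) ` C0)"
    by (rule plB_translate[OF E(2) ab(1) Ztau_0]) auto
  have phi: "plB hi 0 1 ((\<lambda>x. x + 0) ` C0)"
    by (rule plB_cong[OF phi']) (auto simp: hi_def)
  have ha: "h a = 0" "h b = 1" using E(3,4) ab unfolding h_def L_def by auto
  have hia: "hi 0 = a" "hi 1 = b" using E(5,6) unfolding hi_def L_def by auto
  have im_h: "h ` {a..b} \<subseteq> {0..1}" using plB_image[OF ph] ha by simp
  have im_hi: "hi ` {0..1} \<subseteq> {a..b}" using plB_image[OF phi] hia by simp
  have out_h: "h x \<notin> {0..1}" if "x \<notin> {a..b}" for x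
    using that ab unfolding h_def by auto
  have out_hi: "hi y \<notin> {a..b}" if "y \<notin> {0..1}" for y
    using that ab unfolding hi_def by auto
  define \<phi> where "\<phi> = (\<lambda>f. \<lambda>x. h (f (hi x)))"
  define \<psi> where "\<psi> = (\<lambda>g. \<lambda>x. hi (g (h x)))"
  have C1: "F_tau_elem (\<phi> f)" if f: "F_tau_elem f" "supp f \<subseteq> {a..b}" for f
  proof -
    have fx: "f x = x" if "x \<notin> {a..b}" for x using sub_fix[OF f that] .
    obtain Bf where P: "plB f 0 1 Bf" using elem_to_plB[OF f(1)] by blast
    have ends: "f a = a" "f b = b" using sub_ends[OF P fx ab(3,4,5)] by auto
    have Pab: "plB f a b (insert a (insert b (Bf \<inter> {a..b})))"
      by (rule plB_restrict[OF P]) (use ab in auto)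
    have im_f: "f ` {a..b} \<subseteq> {a..b}" using plB_image[OF Pab] ends by simp
    obtain B1 where c1: "plB (f \<circ> hi) 0 1 B1" using plB_comp[OF phi Pab im_hi] by blast
    have im1: "(f \<circ> hi) ` {0..1} \<subseteq> {a..b}" using im_hi im_f by (auto simp: image_subset_iff)
    obtain B2 where c2: "plB (h \<circ> (f \<circ> hi)) 0 1 B2" using plB_comp[OF c1 ph im1] by blast
    have c2': "plB (\<phi> f) 0 1 B2" using c2 unfolding \<phi>_def by (simp add: comp_def)
    show ?thesis
    proof (rule plB_to_elem[OF _ _ _ c2'])
      show "\<forall>x. x \<notin> {0..1} \<longrightarrow> \<phi> f x = x"
        using out_hi fx hhi unfolding \<phi>_def by auto
      show "\<phi> f 0 = 0" "\<phi> f 1 = 1" unfolding \<phi>_def using hia ends ha by auto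
    qed
  qed
  have C2: "F_tau_elem (\<psi> g) \<and> supp (\<psi> g) \<subseteq> {a..b}" if g: "F_tau_elem g" for g
  proof -
    have gfix: "\<forall>x. x \<notin> {0..1} \<longrightarrow> g x = x" "g 0 = 0" "g 1 = 1" using elem_D[OF g] by blast+
    obtain Bg where Pg: "plB g 0 1 Bg" using elem_to_plB[OF g] by blast
    have im_g: "g ` {0..1} \<subseteq> {0..1}" using plB_image[OF Pg] gfix by simp
    obtain B1 where c1: "plB (g \<circ> h) a b B1" using plB_comp[OF ph Pg im_h] by blast
    have im1: "(g \<circ> h) ` {a..b} \<subseteq> {0..1}" using im_h im_g by (auto simp: image_subset_iff)
    obtain B2 where c2: "plB (hi \<circ> (g \<circ> h)) a b B2" using plB_comp[OF c1 phi im1] by blast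
    have c2': "plB (\<psi> g) a b B2" using c2 unfolding \<psi>_def by (simp add: comp_def)
    have pfix: "\<psi> g x = x" if "x \<notin> {a..b}" for x
      using out_h[OF that] gfix(1) hih unfolding \<psi>_def by auto
    have pa: "\<psi> g a = a" "\<psi> g b = b" unfolding \<psi>_def using ha gfix hia by auto
    have p0a: "plB (\<psi> g) 0 a {0, a}"
    proof (rule plB_linear[where k = 0])
      show "\<forall>t\<in>{0..a}. \<psi> g t = \<psi> g 0 + tau powi 0 * (t - 0)"
      proof
        fix t assume t: "t \<in> {0..a}"
        have "\<psi> g 0 = 0" using pfix ab by auto
        moreover have "\<psi> g t = t" using pfix[of t] pa t by (cases "t = a") auto
        ultimately show "\<psi> g t = \<psi> g 0 + tau powi 0 * (t - 0)" by simp
      qed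
      show "\<psi> g 0 \<in> Ztau" using pfix[of 0] ab by auto
    qed (use ab in auto)
    have pb1: "plB (\<psi> g) b 1 {b, 1}"
    proof (rule plB_linear[where k = 0])
      show "\<forall>t\<in>{b..1}. \<psi> g t = \<psi> g b + tau powi 0 * (t - b)"
      proof
        fix t assume t: "t \<in> {b..1}"
        have "\<psi> g t = t" using pfix[of t] pa t by (cases "t = b") auto
        thus "\<psi> g t = \<psi> g b + tau powi 0 * (t - b)" using pa by simp
      qed
      show "\<psi> g b \<in> Ztau" using pa ab by simp
    qed (use ab in auto)
    have P: "plB (\<psi> g) 0 1 ({0, a} \<union> B2 \<union> {b, 1})"
      by (rule plB_concat[OF plB_concat[OF p0a c2'] pb1])
    have el: "F_tau_elem (\<psi> g)"
    proof (rule plB_to_elem[OF _ _ _ P])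
      show "\<forall>x. x \<notin> {0..1} \<longrightarrow> \<psi> g x = x" using pfix ab by auto
      show "\<psi> g 0 = 0" "\<psi> g 1 = 1" using pfix ab by auto
    qed
    have "{x \<in> {0..1}. \<psi> g x \<noteq> x} \<subseteq> {a..b}" using pfix by blast
    then have "supp (\<psi> g) \<subseteq> {a..b}" unfolding supp_def
      by (rule closure_minimal) simp
    thus ?thesis using el by blast
  qed
  have inv1: "\<phi> (\<psi> g) = g" for g unfolding \<phi>_def \<psi>_def using hhi by simp
  have inv2: "\<psi> (\<phi> f) = f" for f unfolding \<phi>_def \<psi>_def using hih by simp
  have "\<phi> \<in> iso (F_tau_sub a b) F_tau"
  proof (rule isoI)
    show "\<phi> \<in> hom (F_tau_sub a b) F_tau"
    proof (rule homI)
      fix f assume "f \<in> carrier (F_tau_sub a b)"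
      thus "\<phi> f \<in> carrier F_tau" using C1 unfolding carrier_sub carrier_F by blast
    next
      fix f1 f2
      show "\<phi> (f1 \<otimes>\<^bsub>F_tau_sub a b\<^esub> f2) = \<phi> f1 \<otimes>\<^bsub>F_tau\<^esub> \<phi> f2"
        unfolding mult_sub mult_F \<phi>_def using hih by (simp add: comp_def)
    qed
    show "bij_betw \<phi> (carrier (F_tau_sub a b)) (carrier F_tau)"
    proof (rule bij_betwI[where g = \<psi>])
      show "\<phi> \<in> carrier (F_tau_sub a b) \<rightarrow> carrier F_tau" using C1 unfolding carrier_sub carrier_F by blast
      show "\<psi> \<in> carrier F_tau \<rightarrow> carrier (F_tau_sub a b)" using C2 unfolding carrier_sub carrier_F by blast
    qed (use inv1 inv2 in auto)
  qed
  thus ?thesis unfolding is_iso_def by blast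
qed


end
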